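(* Let $C=\ln 4/(\ln 4-1)\approx 3.588$. Let $\delta$ be a positive integer and let $G$ be a graph on $n$ vertices with minimum degree at least $\delta$, where $n\ge (C-1)\delta^2+(3C-1)\delta+2$. Then either $G=K_{\delta,n-\delta}$ or $i(G)<i(K_{\delta,n-\delta})$.
   Context: Graphs are simple, loopless and finite. $i(G)$ denotes the total number of independent sets in $G$ (including the empty set). $K_{a,b}$ is the complete bipartite graph with $a$ vertices in one part and $b$ in the other. *)

theory Defs
  imports "HOL-Analysis.Analysis"
begin

definition simple_graph :: "'a set \<Rightarrow> ('a \<Rightarrow> 'a \<Rightarrow> bool) \<Rightarrow> bool" where
  "simple_graph V E \<longleftrightarrow> finite V \<and> (\<forall>x y. E x y \<longrightarrow> x \<in> V \<and> y \<in> V)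
     \<and> (\<forall>x y. E x y \<longrightarrow> E y x) \<and> (\<forall>x. \<not> E x x)"

definition degree :: "'a set \<Rightarrow> ('a \<Rightarrow> 'a \<Rightarrow> bool) \<Rightarrow> 'a \<Rightarrow> nat" where
  "degree V E v = card {u \<in> V. E v u}"

definition independent_set :: "'a set \<Rightarrow> ('a \<Rightarrow> 'a \<Rightarrow> bool) \<Rightarrow> 'a set \<Rightarrow> bool" where
  "independent_set V E S \<longleftrightarrow> S \<subseteq> V \<and> (\<forall>x\<in>S. \<forall>y\<in>S. \<not> E x y)"

definition num_indep :: "'a set \<Rightarrow> ('a \<Rightarrow> 'a \<Rightarrow> bool) \<Rightarrow> nat" where
  "num_indep V E = card {S. independent_set V E S}"

definition Kbip_V :: "nat \<Rightarrow> nat \<Rightarrow> nat set" where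
  "Kbip_V a b = {0..<a+b}"

definition Kbip_E :: "nat \<Rightarrow> nat \<Rightarrow> nat \<Rightarrow> nat \<Rightarrow> bool" where
  "Kbip_E a b x y \<longleftrightarrow> x < a+b \<and> y < a+b \<and> ((x < a) \<noteq> (y < a))"

definition graph_iso :: "'a set \<Rightarrow> ('a \<Rightarrow> 'a \<Rightarrow> bool) \<Rightarrow> 'b set \<Rightarrow> ('b \<Rightarrow> 'b \<Rightarrow> bool) \<Rightarrow> bool" where
  "graph_iso V E V' E' \<longleftrightarrow> (\<exists>f. bij_betw f V V' \<and> (\<forall>x\<in>V. \<forall>y\<in>V. E x y \<longleftrightarrow> E' (f x) (f y)))"

end

theory Submission imports Defs begin

lemma ln4_bounds: "1 < ln (4::real)" "ln (4::real) \<le> 7/5"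
proof -
  have "ln 3 < ln (4::real)" by simp
  then show "1 < ln (4::real)" using ln3_gt_1 by linarith
  have e: "3809/3200 \<le> exp (7/40::real)"
    using exp_lower_Taylor_quadratic[of "7/40"] by (simp add: power2_eq_square)
  have "(4::real) \<le> (3809/3200)^8" by (simp add: power_divide)
  also have "\<dots> \<le> exp (7/40)^8" using e by (intro power_mono) auto
  also have "\<dots> = exp (of_nat 8 * (7/40))" by (rule exp_of_nat_mult[symmetric])
  also have "\<dots> = exp (7/5)" by simp
  finally have "4 \<le> exp (7/5::real)" .
  hence "ln 4 \<le> ln (exp (7/5::real))" by (subst ln_le_cancel_iff) auto
  thus "ln (4::real) \<le> 7/5" by simp
qed

lemma const_bound:
  fixes d :: nat
  shows "(ln (4::real) / (ln 4 - 1) - 1) * real d ^ 2 + (3 * (ln 4 / (ln 4 - 1)) - 1) * real d + 2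
         \<ge> 5/2 * real d ^ 2 + 5 * real d + 2"
proof -
  define c where "c = ln (4::real) - 1"
  have c: "0 < c" "c \<le> 2/5" using ln4_bounds unfolding c_def by auto
  have eq: "ln 4 / (ln 4 - 1) - 1 = 1 / c" using c unfolding c_def by (simp add: field_simps)
  have "1 / c \<ge> 5/2" using c by (simp add: field_simps)
  hence h1: "ln (4::real) / (ln 4 - 1) - 1 \<ge> 5/2" using eq by simp
  hence h2: "3 * (ln (4::real) / (ln 4 - 1)) - 1 \<ge> 5" by linarith
  have "(ln (4::real) / (ln 4 - 1) - 1) * real d ^ 2 \<ge> 5/2 * real d ^ 2"
    using h1 by (intro mult_right_mono) auto
  moreover have "(3 * (ln (4::real) / (ln 4 - 1)) - 1) * real d \<ge> 5 * real d"
    using h2 by (intro mult_right_mono) auto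
  ultimately show ?thesis by linarith
qed

lemma sum_pow_Pow:
  fixes x :: real
  assumes "finite B"
  shows "(\<Sum>J\<in>Pow B. x ^ card J) = (1 + x) ^ card B"
  using assms
proof (induction B rule: finite_induct)
  case empty
  then show ?case by simp
next
  case (insert b F)
  have disj: "Pow F \<inter> insert b ` Pow F = {}" using insert by auto
  have inj: "inj_on (insert b) (Pow F)" using insert unfolding inj_on_def by (metis PowD insert_ident subsetD)
  have "(\<Sum>J\<in>Pow (insert b F). x ^ card J) = (\<Sum>J\<in>Pow F. x ^ card J) + (\<Sum>J\<in>insert b ` Pow F. x ^ card J)"
    unfolding Pow_insert using insert disj by (intro sum.union_disjoint) auto
  also have "(\<Sum>J\<in>insert b ` Pow F. x ^ card J) = (\<Sum>J\<in>Pow F. x ^ card (insert b J))"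
    using inj by (simp add: sum.reindex)
  also have "\<dots> = (\<Sum>J\<in>Pow F. x * x ^ card J)"
  proof (intro sum.cong refl)
    fix J assume "J \<in> Pow F"
    then have "finite J" "b \<notin> J" using insert finite_subset by auto
    then show "x ^ card (insert b J) = x * x ^ card J" by simp
  qed
  also have "\<dots> = x * (1+x) ^ card F" using insert.IH by (simp add: sum_distrib_left[symmetric])
  finally show ?case using insert by (simp add: algebra_simps)
qed


lemma decomp:
  assumes G: "simple_graph V E" and AV: "A \<subseteq> V"
  shows "num_indep V E \<le> (\<Sum>J\<in>Pow (V-A). if independent_set V E J then 2 ^ card {a\<in>A. \<forall>b\<in>J. \<not> E a b} else 0)"
proof -
  have fin: "finite V" using G by (simp add: simple_graph_def)
  let ?F = "{J\<in>Pow (V-A). independent_set V E J}"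
  let ?T = "\<lambda>J. {a\<in>A. \<forall>b\<in>J. \<not> E a b}"
  have sub: "{S. independent_set V E S} \<subseteq> (\<Union>J\<in>?F. (\<lambda>T. J \<union> T) ` Pow (?T J))"
  proof
    fix S assume "S \<in> {S. independent_set V E S}"
    hence S: "S \<subseteq> V" "\<forall>x\<in>S. \<forall>y\<in>S. \<not> E x y" by (auto simp: independent_set_def)
    have "S - A \<in> ?F" using S by (auto simp: independent_set_def)
    moreover have "S \<inter> A \<in> Pow (?T (S - A))" using S by auto
    moreover have "S = (S - A) \<union> (S \<inter> A)" by auto
    ultimately show "S \<in> (\<Union>J\<in>?F. (\<lambda>T. J \<union> T) ` Pow (?T J))" by blast
  qed
  have finF: "finite ?F" using fin by auto
  have finT: "\<And>J. finite (?T J)" using fin AV by (auto intro: finite_subset)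
  have finU: "finite (\<Union>J\<in>?F. (\<lambda>T. J \<union> T) ` Pow (?T J))"
    using finF finT by auto
  have "num_indep V E \<le> card (\<Union>J\<in>?F. (\<lambda>T. J \<union> T) ` Pow (?T J))"
    unfolding num_indep_def using sub finU by (rule card_mono[rotated])
  also have "\<dots> \<le> (\<Sum>J\<in>?F. card ((\<lambda>T. J \<union> T) ` Pow (?T J)))" by (rule card_UN_le[OF finF])
  also have "\<dots> \<le> (\<Sum>J\<in>?F. 2 ^ card (?T J))"
  proof (intro sum_mono)
    fix J show "card ((\<lambda>T. J \<union> T) ` Pow (?T J)) \<le> 2 ^ card (?T J)"
      using card_image_le[of "Pow (?T J)" "\<lambda>T. J \<union> T"] finT[of J] by (simp add: card_Pow)
  qed
  also have "\<dots> = (\<Sum>J\<in>Pow (V-A). if independent_set V E J then 2 ^ card (?T J) else 0)"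
    using fin by (intro sum.inter_filter) auto
  finally show ?thesis .
qed

lemma max_bound:
  assumes G: "simple_graph V E" and indA: "independent_set V E A"
    and maxA: "\<And>S. independent_set V E S \<Longrightarrow> card S \<le> card A"
    and J: "J \<subseteq> V - A" "independent_set V E J"
  shows "card {a\<in>A. \<forall>b\<in>J. \<not> E a b} + card J \<le> card A"
proof -
  let ?T = "{a\<in>A. \<forall>b\<in>J. \<not> E a b}"
  have fin: "finite V" using G by (simp add: simple_graph_def)
  have sym: "\<And>x y. E x y \<Longrightarrow> E y x" using G by (simp add: simple_graph_def)
  have "independent_set V E (?T \<union> J)"
    using indA J sym unfolding independent_set_def by blast
  hence "card (?T \<union> J) \<le> card A" by (rule maxA)
  moreover have "card (?T \<union> J) = card ?T + card J"
    using J indA fin by (intro card_Un_disjoint) (auto simp: independent_set_def intro: finite_subset)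
  ultimately show ?thesis by simp
qed

lemma nb_bound:
  assumes "finite A" "b \<in> J"
  shows "card {a\<in>A. \<forall>b\<in>J. \<not> E a b} + card {a\<in>A. E a b} \<le> card A"
proof -
  have "card {a\<in>A. \<forall>b\<in>J. \<not> E a b} + card {a\<in>A. E a b} = card ({a\<in>A. \<forall>b\<in>J. \<not> E a b} \<union> {a\<in>A. E a b})"
    using assms by (intro card_Un_disjoint[symmetric]) auto
  also have "\<dots> \<le> card A" using assms by (intro card_mono) auto
  finally show ?thesis .
qed

lemma double_count:
  assumes "finite A" "finite B"
  shows "(\<Sum>a\<in>A. card {b\<in>B. E a b}) = (\<Sum>b\<in>B. card {a\<in>A. E a b})"
proof -
  have c: "\<And>X P. finite X \<Longrightarrow> card {x\<in>X. P x} = (\<Sum>x\<in>X. if P x then 1 else 0::nat)"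
    by (simp add: sum.inter_filter[symmetric])
  have "(\<Sum>a\<in>A. card {b\<in>B. E a b}) = (\<Sum>a\<in>A. \<Sum>b\<in>B. if E a b then 1 else 0::nat)"
    using assms by (simp add: c)
  also have "\<dots> = (\<Sum>b\<in>B. \<Sum>a\<in>A. if E a b then 1 else 0::nat)" by (rule sum.swap)
  also have "\<dots> = (\<Sum>b\<in>B. card {a\<in>A. E a b})" using assms by (simp add: c)
  finally show ?thesis .
qed

lemma K_lower:
  assumes "0 < a"
  shows "2 ^ b + 2 ^ a \<le> num_indep (Kbip_V a b) (Kbip_E a b) + 1"
proof -
  let ?P = "Pow {a..<a+b}" let ?Q = "Pow {0..<a} - {{}}"
  have sub: "?P \<union> ?Q \<subseteq> {S. independent_set (Kbip_V a b) (Kbip_E a b) S}"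
    by (auto simp: independent_set_def Kbip_V_def Kbip_E_def)
  have fin: "finite {S. independent_set (Kbip_V a b) (Kbip_E a b) S}"
    by (rule finite_subset[of _ "Pow (Kbip_V a b)"]) (auto simp: independent_set_def Kbip_V_def)
  have disj: "?P \<inter> ?Q = {}" by fastforce
  have "card (?P \<union> ?Q) = card ?P + card ?Q" using disj by (intro card_Un_disjoint) auto
  also have "card ?P = 2^b" by (simp add: card_Pow)
  also have "card ?Q = 2^a - 1" by (simp add: card_Pow)
  finally have "card (?P \<union> ?Q) = 2^b + (2^a - 1)" .
  moreover have "card (?P \<union> ?Q) \<le> num_indep (Kbip_V a b) (Kbip_E a b)"
    unfolding num_indep_def using sub fin by (rule card_mono[rotated])
  moreover have "(1::nat) \<le> 2^a" by simp
  ultimately show ?thesis by linarith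
qed


lemma iso_case:
  assumes G: "simple_graph V E" and indA: "independent_set V E A"
    and indB: "\<forall>x\<in>V-A. \<forall>y\<in>V-A. \<not> E x y"
    and cB: "card (V - A) = d"
    and all: "\<forall>a\<in>A. \<forall>b\<in>V-A. E a b"
  shows "graph_iso V E (Kbip_V d (card V - d)) (Kbip_E d (card V - d))"
proof -
  have fin: "finite V" and sym: "\<And>x y. E x y \<Longrightarrow> E y x" using G by (auto simp: simple_graph_def)
  have AV: "A \<subseteq> V" and Aind: "\<forall>x\<in>A. \<forall>y\<in>A. \<not> E x y" using indA by (auto simp: independent_set_def)
  have finA: "finite A" using fin AV finite_subset by auto
  have "card (V - A) = card V - card A" using finA AV by (rule card_Diff_subset)
  moreover have "card A \<le> card V" using fin AV by (rule card_mono)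
  ultimately have cV: "card V = card A + d" using cB by arith
  obtain g where g: "bij_betw g (V - A) {0..<d}" using ex_bij_betw_finite_nat[of "V - A"] fin cB by auto
  obtain h where h: "bij_betw h A {0..<card A}" using ex_bij_betw_finite_nat[of A] finA by auto
  define f where "f = (\<lambda>x. if x \<in> V - A then g x else d + h x)"
  have f1: "bij_betw f (V - A) {0..<d}" using g by (subst bij_betw_cong[where g = g]) (auto simp: f_def)
  have p: "bij_betw (plus d) {0..<card A} {d..<card A + d}"
    unfolding bij_betw_def by (auto simp: inj_on_def)
  have "bij_betw (plus d \<circ> h) A {d..<card A + d}" by (rule bij_betw_trans[OF h p])
  hence f2: "bij_betw f A {d..<card A + d}"
    by (subst bij_betw_cong[where g = "plus d \<circ> h"]) (auto simp: f_def)
  have "bij_betw f ((V - A) \<union> A) ({0..<d} \<union> {d..<card A + d})"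
    by (rule bij_betw_combine[OF f1 f2]) auto
  moreover have "(V - A) \<union> A = V" using AV by auto
  moreover have "{0..<d} \<union> {d..<card A + d} = Kbip_V d (card V - d)"
    unfolding Kbip_V_def cV by auto
  ultimately have bij: "bij_betw f V (Kbip_V d (card V - d))" by simp
  have lt: "\<And>x. x \<in> V \<Longrightarrow> f x < d + (card V - d)"
    using bij unfolding Kbip_V_def bij_betw_def by auto
  have ltd: "\<And>x. x \<in> V \<Longrightarrow> (f x < d) = (x \<in> V - A)"
  proof -
    fix x assume "x \<in> V"
    show "(f x < d) = (x \<in> V - A)"
    proof (cases "x \<in> V - A")
      case True thus ?thesis using g unfolding bij_betw_def f_def by auto
    next
      case False thus ?thesis unfolding f_def by auto
    qed
  qed
  have "\<forall>x\<in>V. \<forall>y\<in>V. E x y \<longleftrightarrow> Kbip_E d (card V - d) (f x) (f y)"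
  proof (intro ballI)
    fix x y assume x: "x \<in> V" and y: "y \<in> V"
    have "Kbip_E d (card V - d) (f x) (f y) \<longleftrightarrow> (x \<in> V - A) \<noteq> (y \<in> V - A)"
      unfolding Kbip_E_def using lt[OF x] lt[OF y] ltd[OF x] ltd[OF y] by auto
    moreover have "E x y \<longleftrightarrow> (x \<in> V - A) \<noteq> (y \<in> V - A)"
      using x y indB Aind all sym by blast
    ultimately show "E x y \<longleftrightarrow> Kbip_E d (card V - d) (f x) (f y)" by simp
  qed
  thus ?thesis unfolding graph_iso_def using bij by blast
qed

lemma eq_count:
  assumes G: "simple_graph V E" and AV: "A \<subseteq> V"
    and cB: "card (V - A) = d" and d: "0 < d"
    and all: "\<forall>a\<in>A. \<forall>b\<in>V-A. E a b"
    and xy: "x \<in> V - A" "y \<in> V - A" "E x y"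
  shows "num_indep V E + 2 \<le> 2 ^ card A + 2 ^ d"
proof -
  have fin: "finite V" and irr: "\<And>x. \<not> E x x" using G by (auto simp: simple_graph_def)
  have finB: "finite (V - A)" using fin by auto
  define w where "w = (\<lambda>J. if independent_set V E J then 2 ^ card {a\<in>A. \<forall>b\<in>J. \<not> E a b} else 0::nat)"
  have dec: "num_indep V E \<le> sum w (Pow (V - A))" unfolding w_def by (rule decomp[OF G AV])
  have ne: "x \<noteq> y" using xy irr by auto
  have P1: "{} \<in> Pow (V - A)" by simp
  have P2: "{x,y} \<in> Pow (V - A) - {{}}" using xy by auto
  define R where "R = Pow (V - A) - {{}} - {{x,y}}"
  have s1: "sum w (Pow (V - A)) = w {} + sum w (Pow (V - A) - {{}})"
    using finB P1 by (intro sum.remove) auto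
  have s2: "sum w (Pow (V - A) - {{}}) = w {x,y} + sum w R"
    unfolding R_def using finB P2 by (intro sum.remove) auto
  have w0: "w {} = 2 ^ card A" unfolding w_def by (simp add: independent_set_def)
  have wxy: "w {x,y} = 0" unfolding w_def using xy by (auto simp: independent_set_def)
  have wR: "\<And>J. J \<in> R \<Longrightarrow> w J \<le> 1"
  proof -
    fix J assume "J \<in> R"
    then obtain b where b: "b \<in> J" "J \<subseteq> V - A" unfolding R_def by auto
    have e: "{a\<in>A. \<forall>b\<in>J. \<not> E a b} = {}" using b all by auto
    show "w J \<le> 1" unfolding w_def e by simp
  qed
  have "sum w R \<le> card R" using sum_bounded_above[of R w 1] wR by simp
  moreover have "card R = 2 ^ d - 2"
  proof -
    have "card (Pow (V - A) - {{}}) = 2 ^ d - 1" using finB cB by (simp add: card_Pow)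
    thus ?thesis unfolding R_def using P2 finB by (simp add: card_Diff_singleton)
  qed
  moreover have "2 \<le> (2::nat) ^ d" using d by (cases d) auto
  ultimately show ?thesis using dec s1 s2 w0 wxy by linarith
qed


lemma big_case:
  assumes G: "simple_graph V E" and indA: "independent_set V E A"
    and maxA: "\<And>S. independent_set V E S \<Longrightarrow> card S \<le> card A"
    and degA: "\<And>a. a \<in> A \<Longrightarrow> d \<le> card {b\<in>V-A. E a b}"
    and dB: "d + 1 \<le> card (V - A)"
    and nbig: "5 * d^2 + 10*d + 4 \<le> 2 * card V"
  shows "num_indep V E \<le> 2 ^ (card V - d)"
proof -
  have fin: "finite V" using G by (auto simp: simple_graph_def)
  have AV: "A \<subseteq> V" using indA by (auto simp: independent_set_def)
  have finA: "finite A" using fin AV finite_subset by auto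
  define B where "B = V - A"
  have finB: "finite B" using fin B_def by auto
  define \<alpha> where "\<alpha> = card A"
  define \<beta> where "\<beta> = card B"
  define n where "n = card V"
  have "card B = card V - card A" unfolding B_def using finA AV by (rule card_Diff_subset)
  moreover have "card A \<le> card V" using fin AV by (rule card_mono)
  ultimately have abn: "\<alpha> + \<beta> = n" unfolding \<alpha>_def \<beta>_def n_def by arith
  have dn: "d \<le> n" using dB abn unfolding \<beta>_def B_def by arith
  define w where "w = (\<lambda>J. if independent_set V E J then 2 ^ card {a\<in>A. \<forall>b\<in>J. \<not> E a b} else 0::nat)"
  have dec: "num_indep V E \<le> sum w (Pow B)" unfolding w_def B_def by (rule decomp[OF G AV])
  hence "real (num_indep V E) \<le> real (sum w (Pow B))" by (simp only: of_nat_le_iff)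
  also have "\<dots> = (\<Sum>J\<in>Pow B. real (w J))" by (rule of_nat_sum)
  finally have decR: "real (num_indep V E) \<le> (\<Sum>J\<in>Pow B. real (w J))" .
  have wb1: "real (w J) \<le> 2^\<alpha> * (1/2)^card J" if J: "J \<in> Pow B" for J
  proof (cases "independent_set V E J")
    case True
    have "card {a\<in>A. \<forall>b\<in>J. \<not> E a b} + card J \<le> \<alpha>"
      unfolding \<alpha>_def using J True by (intro max_bound[OF G indA maxA]) (auto simp: B_def)
    hence "(2::real) ^ (card {a\<in>A. \<forall>b\<in>J. \<not> E a b} + card J) \<le> 2 ^ \<alpha>"
      by (rule power_increasing) simp
    hence "(2::real) ^ card {a\<in>A. \<forall>b\<in>J. \<not> E a b} * 2 ^ card J \<le> 2 ^ \<alpha>"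
      by (simp add: power_add)
    thus ?thesis using True unfolding w_def by (simp add: power_one_over field_simps)
  next
    case False thus ?thesis unfolding w_def by simp
  qed
  have wb2: "real (w J) \<le> 2^\<alpha> / 2^L"
    if J: "J \<in> Pow B" and b: "b \<in> J" and L: "L \<le> card {a\<in>A. E a b}" for J b L
  proof (cases "independent_set V E J")
    case True
    have "card {a\<in>A. \<forall>b\<in>J. \<not> E a b} + card {a\<in>A. E a b} \<le> \<alpha>"
      unfolding \<alpha>_def using finA b by (rule nb_bound)
    hence "card {a\<in>A. \<forall>b\<in>J. \<not> E a b} + L \<le> \<alpha>" using L by linarith
    hence "(2::real) ^ (card {a\<in>A. \<forall>b\<in>J. \<not> E a b} + L) \<le> 2 ^ \<alpha>"
      by (rule power_increasing) simp
    hence "(2::real) ^ card {a\<in>A. \<forall>b\<in>J. \<not> E a b} * 2 ^ L \<le> 2 ^ \<alpha>"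
      by (simp add: power_add)
    thus ?thesis using True unfolding w_def by (simp add: field_simps)
  next
    case False thus ?thesis unfolding w_def by simp
  qed
  have sumP: "(\<Sum>J\<in>Pow X. (2::real)^\<alpha> * (1/2)^card J) = 2^\<alpha> * (3/2)^card X" if "finite X" for X
    using sum_pow_Pow[OF that, of "1/2"] by (simp add: sum_distrib_left[symmetric])
  have goalR: "(\<Sum>J\<in>Pow B. real (w J)) \<le> 2 ^ (n - d)"
  proof (cases "5 * d \<le> 2 * \<beta>")
    case True
    have "(\<Sum>J\<in>Pow B. real (w J)) \<le> (\<Sum>J\<in>Pow B. 2^\<alpha> * (1/2)^card J)"
      by (intro sum_mono wb1)
    also have "\<dots> = 2^\<alpha> * (3/2)^\<beta>" unfolding \<beta>_def by (rule sumP[OF finB])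
    also have "\<dots> \<le> 2 ^ (n - d)"
    proof -
      have "(4::real) \<le> (4/3)^5" by (simp add: power_divide)
      hence "(4::real)^d \<le> ((4/3)^5)^d" by (rule power_mono) simp
      also have "\<dots> = (4/3)^(5*d)" by (simp add: power_mult)
      also have "\<dots> \<le> (4/3)^(2*\<beta>)" using True by (intro power_increasing) auto
      finally have "(4::real)^d \<le> (4/3)^(2*\<beta>)" .
      moreover have "(4::real)^d = (2^d)^2" by (simp add: power2_eq_square power_mult_distrib[symmetric])
      moreover have "(4/3::real)^(2*\<beta>) = ((4/3)^\<beta>)^2" by (metis power_mult mult.commute)
      ultimately have "((2::real)^d)^2 \<le> ((4/3)^\<beta>)^2" by simp
      hence k: "(2::real)^d \<le> (4/3)^\<beta>" by (rule power2_le_imp_le) simp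
      have m: "(3/2::real)^\<beta> * (4/3)^\<beta> = 2^\<beta>" by (simp add: power_mult_distrib[symmetric])
      have "2^\<alpha> * (3/2)^\<beta> * 2^d \<le> 2^\<alpha> * (3/2)^\<beta> * (4/3::real)^\<beta>"
        using k by (intro mult_left_mono) auto
      also have "\<dots> = 2^\<alpha> * 2^\<beta>" using m by (simp add: mult.assoc)
      also have "\<dots> = 2^(n-d) * 2^d" using abn dn by (simp add: power_add[symmetric])
      finally show ?thesis by simp
    qed
    finally show ?thesis .
  next
    case False
    hence d0: "0 < d" by auto
    have h: "(2*\<beta>+1)*(d+2) \<le> 5*d*(d+2)" using False by (intro mult_le_mono1) linarith
    have bn: "\<beta>*(d+2) < n" using h nbig unfolding n_def power2_eq_square by (simp add: algebra_simps)
    have ba: "\<beta>*(d+1) < \<alpha>" using bn abn by (simp add: algebra_simps)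
    define dA where "dA = (\<lambda>b. card {a\<in>A. E a b})"
    define S where "S = {b\<in>B. dA b < d+2}"
    define s where "s = card S"
    have SB: "S \<subseteq> B" unfolding S_def by auto
    have finS: "finite S" using finB SB finite_subset by auto
    have e1: "\<alpha> * d \<le> (\<Sum>a\<in>A. card {b\<in>B. E a b})"
      using sum_bounded_below[of A d "\<lambda>a. card {b\<in>B. E a b}"] degA unfolding \<alpha>_def B_def by simp
    have e2: "(\<Sum>a\<in>A. card {b\<in>B. E a b}) = (\<Sum>b\<in>B. dA b)" unfolding dA_def by (rule double_count[OF finA finB])
    have e3: "(\<Sum>b\<in>B. dA b) = (\<Sum>b\<in>B-S. dA b) + (\<Sum>b\<in>S. dA b)" using SB finB by (rule sum.subset_diff)
    have e4: "(\<Sum>b\<in>S. dA b) \<le> s * (d+1)"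
      using sum_bounded_above[of S dA "d+1"] unfolding s_def S_def by fastforce
    have e5: "(\<Sum>b\<in>B-S. dA b) \<le> (\<beta> - s) * \<alpha>"
    proof -
      have "(\<Sum>b\<in>B-S. dA b) \<le> card (B - S) * \<alpha>"
        using sum_bounded_above[of "B-S" dA \<alpha>] card_mono[OF finA]
        unfolding dA_def \<alpha>_def by fastforce
      moreover have "card (B - S) = \<beta> - s" unfolding \<beta>_def s_def using finS SB by (rule card_Diff_subset)
      ultimately show ?thesis by simp
    qed
    have edge: "\<alpha> * d \<le> (\<beta> - s) * \<alpha> + s * (d+1)" using e1 e2 e3 e4 e5 by linarith
    have sd: "s + d \<le> \<beta>"
    proof (rule ccontr)
      assume "\<not> s + d \<le> \<beta>"
      hence "\<beta> - s \<le> d - 1" by arith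
      hence "(\<beta> - s) * \<alpha> \<le> (d - 1) * \<alpha>" by (rule mult_le_mono1)
      moreover have "s \<le> \<beta>" unfolding s_def \<beta>_def using finB SB by (rule card_mono)
      hence "s * (d+1) \<le> \<beta> * (d+1)" by (rule mult_le_mono1)
      moreover have "\<alpha> + (d-1)*\<alpha> = \<alpha> * d" using d0 by (cases d) auto
      ultimately show False using edge ba by linarith
    qed
    define t where "t = \<beta> - d"
    have t1: "1 \<le> t" and st: "s \<le> t" and at: "\<alpha> + t = n - d" using dB sd abn unfolding t_def \<beta>_def B_def by auto
    have PS: "Pow S \<subseteq> Pow B" using SB by auto
    have "(\<Sum>J\<in>Pow B. real (w J)) = (\<Sum>J\<in>Pow B - Pow S. real (w J)) + (\<Sum>J\<in>Pow S. real (w J))"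
      using finB PS by (intro sum.subset_diff) auto
    also have "(\<Sum>J\<in>Pow S. real (w J)) \<le> (\<Sum>J\<in>Pow S. 2^\<alpha> * (1/2)^card J)"
      using PS by (intro sum_mono wb1) auto
    also have "\<dots> = 2^\<alpha> * (3/2)^s" unfolding s_def by (rule sumP[OF finS])
    also have "(\<Sum>J\<in>Pow B - Pow S. real (w J)) \<le> of_nat (card (Pow B - Pow S)) * (2^\<alpha> / 2^(d+2))"
    proof (rule sum_bounded_above)
      fix J assume J: "J \<in> Pow B - Pow S"
      then obtain b where b: "b \<in> J" "b \<notin> S" "b \<in> B" by auto
      hence "d + 2 \<le> dA b" unfolding S_def by auto
      thus "real (w J) \<le> 2^\<alpha> / 2^(d+2)" using wb2[of J b "d+2"] J b unfolding dA_def by auto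
    qed
    also have "of_nat (card (Pow B - Pow S)) * ((2::real)^\<alpha> / 2^(d+2)) \<le> 2^\<beta> * (2^\<alpha> / 2^(d+2))"
    proof (intro mult_right_mono)
      have "card (Pow B - Pow S) \<le> card (Pow B)" using finB by (intro card_mono) auto
      thus "real (card (Pow B - Pow S)) \<le> 2^\<beta>" unfolding \<beta>_def using finB
        by (simp add: card_Pow)
    qed auto
    also have "2^\<beta> * (2^\<alpha> / 2^(d+2)) + 2^\<alpha> * (3/2)^s \<le> (2::real) ^ (n - d)"
    proof -
      have "(2::real)^\<alpha> * (3/2)^s \<le> 2^\<alpha> * (3/2)^t" using st by (intro mult_left_mono power_increasing) auto
      also have "\<dots> = 2^\<alpha> * 2^t * (3/4)^t" by (simp add: power_mult_distrib[symmetric])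
      also have "\<dots> = 2^(n-d) * (3/4)^t" using at by (simp add: power_add[symmetric])
      also have "\<dots> \<le> 2^(n-d) * (3/4)" using power_decreasing[of 1 t "3/4::real"] t1 by (intro mult_left_mono) auto
      finally have A1: "(2::real)^\<alpha> * (3/2)^s \<le> 2^(n-d) * (3/4)" .
      have "(2::real)^\<beta> * (2^\<alpha> / 2^(d+2)) = 2^(\<alpha>+\<beta>) / (2^d * 4)" by (simp add: power_add mult.commute)
      also have "\<dots> = 2^(n-d) * 2^d / (2^d * 4)" using abn dn by (simp add: power_add[symmetric])
      also have "\<dots> = 2^(n-d) / 4" by simp
      finally have A2: "(2::real)^\<beta> * (2^\<alpha> / 2^(d+2)) = 2^(n-d) / 4" .
      show ?thesis using A1 A2 by simp
    qed
    finally show ?thesis by simp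
  qed
  have "real (num_indep V E) \<le> 2 ^ (n - d)" using decR goalR by linarith
  hence "real (num_indep V E) \<le> real ((2::nat) ^ (n - d))" by simp
  hence "num_indep V E \<le> 2 ^ (n - d)" by (simp only: of_nat_le_iff)
  thus ?thesis unfolding n_def .
qed


theorem mainTheorem3:
  fixes V :: "'a set" and E :: "'a \<Rightarrow> 'a \<Rightarrow> bool" and \<delta> :: nat
  assumes "simple_graph V E"
    and "\<delta> > 0"
    and "\<forall>v\<in>V. degree V E v \<ge> \<delta>"
    and "real (card V) \<ge> (ln 4 / (ln 4 - 1) - 1) * real \<delta> ^ 2
                         + (3 * (ln 4 / (ln 4 - 1)) - 1) * real \<delta> + 2"
  shows "graph_iso V E (Kbip_V \<delta> (card V - \<delta>)) (Kbip_E \<delta> (card V - \<delta>))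
         \<or> num_indep V E < num_indep (Kbip_V \<delta> (card V - \<delta>)) (Kbip_E \<delta> (card V - \<delta>))"
proof -
  note G = assms(1)
  have fin: "finite V" and irr: "\<And>x. \<not> E x x" using G by (auto simp: simple_graph_def)
  have "real (card V) \<ge> 5/2 * real \<delta> ^ 2 + 5 * real \<delta> + 2" using assms(4) const_bound[of \<delta>] by linarith
  hence "real (5 * \<delta>^2 + 10*\<delta> + 4) \<le> real (2 * card V)" by simp
  hence nbig: "5 * \<delta>^2 + 10*\<delta> + 4 \<le> 2 * card V" by (simp only: of_nat_le_iff)
  let ?IS = "{S. independent_set V E S}"
  have finIS: "finite ?IS" by (rule finite_subset[of _ "Pow V"]) (auto simp: independent_set_def fin)
  have "V \<noteq> {}" using nbig by auto
  then obtain v where v: "v \<in> V" by auto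
  have vIS: "{v} \<in> ?IS" using v irr by (auto simp: independent_set_def)
  hence ISne: "?IS \<noteq> {}" by auto
  have "Max (card ` ?IS) \<in> card ` ?IS" using finIS ISne by (intro Max_in) auto
  then obtain A where A: "A \<in> ?IS" and Amax: "card A = Max (card ` ?IS)" by (metis imageE)
  have maxA: "\<And>S. independent_set V E S \<Longrightarrow> card S \<le> card A"
    unfolding Amax using finIS by (intro Max_ge) auto
  have indA: "independent_set V E A" using A by simp
  have AV: "A \<subseteq> V" and Aind: "\<forall>x\<in>A. \<forall>y\<in>A. \<not> E x y" using indA by (auto simp: independent_set_def)
  have finA: "finite A" using fin AV finite_subset by auto
  have "1 \<le> card A" using maxA[of "{v}"] vIS by simp
  hence Ane: "A \<noteq> {}" by auto
  have finB: "finite (V - A)" using fin by auto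
  have degA: "\<And>a. a \<in> A \<Longrightarrow> \<delta> \<le> card {b\<in>V-A. E a b}"
  proof -
    fix a assume a: "a \<in> A"
    have e: "{u\<in>V. E a u} = {b\<in>V-A. E a b}" using a Aind by auto
    have "\<delta> \<le> card {u\<in>V. E a u}" using assms(3) a AV unfolding degree_def by auto
    thus "\<delta> \<le> card {b\<in>V-A. E a b}" unfolding e .
  qed
  obtain a0 where a0: "a0 \<in> A" using Ane by auto
  have "card {b\<in>V-A. E a0 b} \<le> card (V - A)" using finB by (intro card_mono) auto
  hence dB: "\<delta> \<le> card (V - A)" using degA[OF a0] by linarith
  have "card (V - A) = card V - card A" using finA AV by (rule card_Diff_subset)
  moreover have "card A \<le> card V" using fin AV by (rule card_mono)
  ultimately have cV: "card V = card A + card (V - A)" by arith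
  have Klow: "2 ^ (card V - \<delta>) + 2 ^ \<delta> \<le> num_indep (Kbip_V \<delta> (card V - \<delta>)) (Kbip_E \<delta> (card V - \<delta>)) + 1"
    by (rule K_lower[OF assms(2)])
  have two: "2 \<le> (2::nat) ^ \<delta>" using assms(2) by (cases \<delta>) auto
  show ?thesis
  proof (cases "card (V - A) = \<delta>")
    case True
    have all: "\<forall>a\<in>A. \<forall>b\<in>V-A. E a b"
    proof (intro ballI)
      fix a b assume a: "a \<in> A" and b: "b \<in> V - A"
      have "{b\<in>V-A. E a b} = V - A"
        using finB degA[OF a] True by (intro card_subset_eq) (auto intro: le_antisym card_mono)
      thus "E a b" using b by auto
    qed
    show ?thesis
    proof (cases "\<forall>x\<in>V-A. \<forall>y\<in>V-A. \<not> E x y")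
      case True
      then show ?thesis using iso_case[OF G indA True \<open>card (V - A) = \<delta>\<close> all] by simp
    next
      case False
      then obtain x y where xy: "x \<in> V - A" "y \<in> V - A" "E x y" by auto
      have c1: "num_indep V E + 2 \<le> 2 ^ card A + 2 ^ \<delta>"
        by (rule eq_count[OF G AV \<open>card (V - A) = \<delta>\<close> assms(2) all xy])
      have "card A = card V - \<delta>" using cV \<open>card (V - A) = \<delta>\<close> by simp
      hence "num_indep V E + 2 \<le> 2 ^ (card V - \<delta>) + 2 ^ \<delta>" using c1 by simp
      hence "num_indep V E < num_indep (Kbip_V \<delta> (card V - \<delta>)) (Kbip_E \<delta> (card V - \<delta>))"
        using Klow by linarith
      thus ?thesis by simp
    qed
  next
    case False
    hence "\<delta> + 1 \<le> card (V - A)" using dB by simp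
    hence "num_indep V E \<le> 2 ^ (card V - \<delta>)"
      using big_case[OF G indA maxA degA _ nbig] by blast
    hence "num_indep V E < num_indep (Kbip_V \<delta> (card V - \<delta>)) (Kbip_E \<delta> (card V - \<delta>))"
      using Klow two by linarith
    thus ?thesis by simp
  qed
qed

end
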